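(* Let $H$ be the 28-element set $H=\{n_M : n\in\mathbb{Z}_{12}\}\cup\{n_m : n\in\mathbb{Z}_{12}\}\cup\{n_{\mathrm{aug}} : n\in\{0,1,2,3\}\}$. Let $\mathcal{S}$ be the symmetric relation on $H$ consisting exactly of the pairs $(n_M,n_m)$, $(n_M,(n+4)_m)$, $(n_M,(n\bmod 4)_{\mathrm{aug}})$, $(n_m,n_M)$, $(n_m,(n+8)_M)$, $(n_m,((n+3)\bmod 4)_{\mathrm{aug}})$ for $n\in\mathbb{Z}_{12}$ together with their reverses, and let $\mathcal{T}$ be the symmetric relation on $H$ consisting exactly of the pairs $(n_M,(n+4)_M)$, $(n_M,(n+8)_M)$, $(n_M,(n+1)_m)$, $(n_M,(n+5)_m)$, $(n_M,((n+3)\bmod 4)_{\mathrm{aug}})$, $(n_m,(n+4)_m)$, $(n_m,(n+8)_m)$, $(n_m,(n+11)_M)$, $(n_m,(n+7)_M)$, $(n_m,(n\bmod 4)_{\mathrm{aug}})$ for $n\in\mathbb{Z}_{12}$ together with their reverses. Then the monoid $M_{\mathcal{ST}}$ of relations on $H$ generated by $\mathcal{S}$ and $\mathcal{T}$ under composition of relations contains eight elements and has the presentation $$M_{\mathcal{ST}}=\langle \mathcal{S},\mathcal{T}\mid \mathcal{TS}=\mathcal{ST},\ \mathcal{S}^3=\mathcal{ST},\ \mathcal{T}^4=\mathcal{T}^3,\ \mathcal{TS}^2=\mathcal{T}^2,\ \mathcal{ST}^3=\mathcal{ST}^2\rangle.$$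
   Context: Indices $n$ of $n_M,n_m$ are taken modulo 12; the elements of $H$ are formal labels (musically: major, minor and augmented triads; $\mathcal{S}$ and $\mathcal{T}$ are Douthett's parsimonious relations $\mathcal{P}_{1,0}$ and $\mathcal{P}_{2,0}$). Composition of relations: $\mathcal{R}'\mathcal{R}=\mathcal{R}'\circ\mathcal{R}$ is the set of pairs $(x,z)$ such that there exists $y$ with $(x,y)\in\mathcal{R}$ and $(y,z)\in\mathcal{R}'$; juxtaposition in the presentation denotes this composition, and the monoid identity is the identity relation on $H$. *)

theory Defs
  imports Main
begin

text \<open>Triads: Maj n = n_M, Min n = n_m, Aug n = n_aug. Indices are natural numbers
  reduced modulo 12 (resp. 4); the carrier H only contains the valid indices.\<close>
datatype triad = Maj nat | Min nat | Aug nat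

definition H :: "triad set" where
  "H = {Maj n | n. n < 12} \<union> {Min n | n. n < 12} \<union> {Aug n | n. n < 4}"

definition S_base :: "triad rel" where
  "S_base =
     {(Maj n, Min n) | n. n < 12}
   \<union> {(Maj n, Min ((n + 4) mod 12)) | n. n < 12}
   \<union> {(Maj n, Aug (n mod 4)) | n. n < 12}
   \<union> {(Min n, Maj n) | n. n < 12}
   \<union> {(Min n, Maj ((n + 8) mod 12)) | n. n < 12}
   \<union> {(Min n, Aug ((n + 3) mod 4)) | n. n < 12}"

definition S_rel :: "triad rel" where
  "S_rel = S_base \<union> S_base\<inverse>"

definition T_base :: "triad rel" where
  "T_base =
     {(Maj n, Maj ((n + 4) mod 12)) | n. n < 12}
   \<union> {(Maj n, Maj ((n + 8) mod 12)) | n. n < 12}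
   \<union> {(Maj n, Min ((n + 1) mod 12)) | n. n < 12}
   \<union> {(Maj n, Min ((n + 5) mod 12)) | n. n < 12}
   \<union> {(Maj n, Aug ((n + 3) mod 4)) | n. n < 12}
   \<union> {(Min n, Min ((n + 4) mod 12)) | n. n < 12}
   \<union> {(Min n, Min ((n + 8) mod 12)) | n. n < 12}
   \<union> {(Min n, Maj ((n + 11) mod 12)) | n. n < 12}
   \<union> {(Min n, Maj ((n + 7) mod 12)) | n. n < 12}
   \<union> {(Min n, Aug (n mod 4)) | n. n < 12}"

definition T_rel :: "triad rel" where
  "T_rel = T_base \<union> T_base\<inverse>"

datatype gen = Sg | Tg

definition gen_rel :: "gen \<Rightarrow> triad rel" where
  "gen_rel g = (case g of Sg \<Rightarrow> S_rel | Tg \<Rightarrow> T_rel)"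

text \<open>Evaluation of a word [a1,...,an] as the product a1 a2 ... an, where juxtaposition
  R' R means R' \<circ> R = {(x,z). \<exists>y. (x,y)\<in>R \<and> (y,z)\<in>R'}, i.e. R O R' in Isabelle.\<close>
fun eval_word :: "gen list \<Rightarrow> triad rel" where
  "eval_word [] = Id_on H"
| "eval_word (a # w) = eval_word w O gen_rel a"

definition M_ST :: "triad rel set" where
  "M_ST = range eval_word"

definition pres_rels :: "(gen list \<times> gen list) set" where
  "pres_rels =
    {([Tg, Sg], [Sg, Tg]),
     ([Sg, Sg, Sg], [Sg, Tg]),
     ([Tg, Tg, Tg, Tg], [Tg, Tg, Tg]),
     ([Tg, Sg, Sg], [Tg, Tg]),
     ([Sg, Tg, Tg, Tg], [Sg, Tg, Tg])}"

inductive pres_cong :: "gen list \<Rightarrow> gen list \<Rightarrow> bool" where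
  refl: "pres_cong w w"
| sym: "pres_cong u v \<Longrightarrow> pres_cong v u"
| trans: "pres_cong u v \<Longrightarrow> pres_cong v w \<Longrightarrow> pres_cong u w"
| rel: "(l, r) \<in> pres_rels \<Longrightarrow> pres_cong (u @ l @ v) (u @ r @ v)"

end

theory Submission
  imports Defs
begin

fun kind :: "triad \<Rightarrow> nat" where
  "kind (Maj _) = 0" | "kind (Min _) = 1" | "kind (Aug _) = 2"
fun idx :: "triad \<Rightarrow> nat" where
  "idx (Maj n) = n" | "idx (Min n) = n" | "idx (Aug n) = n"
definition key :: "triad \<Rightarrow> triad \<Rightarrow> nat \<times> nat \<times> nat" where
  "key x z = (kind x, kind z, if kind x = 2 \<or> kind z = 2 then (idx z + 12 - idx x) mod 4
                             else (idx z + 12 - idx x) mod 12)"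
definition Rel :: "(nat \<times> nat \<times> nat) set \<Rightarrow> triad rel" where
  "Rel K = {(x,z). x \<in> H \<and> z \<in> H \<and> key x z \<in> K}"

lemma mem_H: "x \<in> H \<longleftrightarrow> (case x of Maj n \<Rightarrow> n < 12 | Min n \<Rightarrow> n < 12 | Aug n \<Rightarrow> n < 4)"
  unfolding H_def by (cases x) auto

lemma lt12: "n < (12::nat) \<Longrightarrow> n = 0 \<or> n = 1 \<or> n = 2 \<or> n = 3 \<or> n = 4 \<or> n = 5 \<or> n = 6 \<or> n = 7 \<or> n = 8 \<or> n = 9 \<or> n = 10 \<or> n = 11"
  by presburger
lemma lt4: "n < (4::nat) \<Longrightarrow> n = 0 \<or> n = 1 \<or> n = 2 \<or> n = 3"
  by presburger

lemma H_list: "H = set [Maj 0, Maj 1, Maj 2, Maj 3, Maj 4, Maj 5, Maj 6, Maj 7, Maj 8, Maj 9, Maj 10, Maj 11, Min 0, Min 1, Min 2, Min 3, Min 4, Min 5, Min 6, Min 7, Min 8, Min 9, Min 10, Min 11, Aug 0, Aug 1, Aug 2, Aug 3]"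
  unfolding H_def by (auto dest!: lt12 lt4)

definition mo :: "nat \<Rightarrow> nat \<Rightarrow> nat" where
  "mo a b = (if a = 2 \<or> b = 2 then 4 else 12)"

definition cands :: "nat \<Rightarrow> nat \<Rightarrow> nat \<Rightarrow> nat \<Rightarrow> nat \<Rightarrow> nat list" where
  "cands kx ky kz d1 d2 =
    (if kx \<noteq> 2 \<and> ky \<noteq> 2 \<and> kz \<noteq> 2 then [(d1 + d2) mod 12]
     else if kx = 2 \<or> kz = 2 then [(d1 + d2) mod 4]
     else [(d1 + d2) mod 4, (d1 + d2) mod 4 + 4, (d1 + d2) mod 4 + 8])"

definition pos :: "triad \<Rightarrow> int" where "pos x = int (idx x)"

definition dd :: "triad \<Rightarrow> triad \<Rightarrow> nat" where
  "dd x z = nat ((pos z - pos x) mod (if kind x = 2 \<or> kind z = 2 then 4 else 12))"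

lemma nmod12: "a \<le> 12 \<Longrightarrow> (b + 12 - a) mod 12 = nat ((int b - int a) mod 12)"
proof -
  assume "a \<le> 12"
  hence "int ((b + 12 - a) mod 12) = ((int b - int a) + 1 * 12) mod 12" by (simp add: of_nat_mod of_nat_diff algebra_simps)
  also have "\<dots> = (int b - int a) mod 12" by (rule mod_mult_self1)
  finally show ?thesis by simp
qed

lemma nmod4: "a \<le> 12 \<Longrightarrow> (b + 12 - a) mod 4 = nat ((int b - int a) mod 4)"
proof -
  assume "a \<le> 12"
  hence "int ((b + 12 - a) mod 4) = ((int b - int a) + 3 * 4) mod 4" by (simp add: of_nat_mod of_nat_diff algebra_simps)
  also have "\<dots> = (int b - int a) mod 4" by (rule mod_mult_self1)
  finally show ?thesis by simp
qed

lemma key_dd: "x \<in> H \<Longrightarrow> key x z = (kind x, kind z, dd x z)"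
  unfolding key_def dd_def pos_def
  by (cases x; cases z) (auto simp: mem_H nmod4 nmod12)

lemma Rel_mem: "(x,z) \<in> Rel K \<longleftrightarrow> x \<in> H \<and> z \<in> H \<and> (kind x, kind z, dd x z) \<in> K"
  unfolding Rel_def using key_dd by auto

lemma dd4: "int (dd a b) mod 4 = (pos b - pos a) mod 4"
  unfolding dd_def by (simp add: mod_mod_cancel)
lemma dd12: "kind a \<noteq> 2 \<Longrightarrow> kind b \<noteq> 2 \<Longrightarrow> int (dd a b) = (pos b - pos a) mod 12"
  unfolding dd_def by simp
lemma ddA: "kind a = 2 \<or> kind b = 2 \<Longrightarrow> int (dd a b) = (pos b - pos a) mod 4"
  unfolding dd_def by auto
lemma dd_lt: "dd a b < 12"
  unfolding dd_def by (auto simp: nat_less_iff)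
lemma L12: "((b - a) mod 12 + (c - b) mod 12) mod (12::int) = (c - a) mod 12"
  by (simp add: mod_add_eq)
lemma L4: "((b - a) mod 4 + (c - b) mod 4) mod (4::int) = (c - a) mod 4"
  by (simp add: mod_add_eq)

lemma C4: "int (dd x z) mod 4 = (int (dd x y) + int (dd y z)) mod 4"
proof -
  have "int (dd x z) mod 4 = (pos z - pos x) mod 4" by (rule dd4)
  also have "\<dots> = ((pos y - pos x) mod 4 + (pos z - pos y) mod 4) mod 4" by (rule L4[symmetric])
  also have "\<dots> = (int (dd x y) mod 4 + int (dd y z) mod 4) mod 4" by (simp only: dd4)
  also have "\<dots> = (int (dd x y) + int (dd y z)) mod 4" by (rule mod_add_eq)
  finally show ?thesis .
qed

lemma C12: "kind x \<noteq> 2 \<Longrightarrow> kind y \<noteq> 2 \<Longrightarrow> kind z \<noteq> 2 \<Longrightarrow> dd x z = (dd x y + dd y z) mod 12"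
proof -
  assume k: "kind x \<noteq> 2" "kind y \<noteq> 2" "kind z \<noteq> 2"
  have "int (dd x z) = (pos z - pos x) mod 12" using k by (simp add: dd12)
  also have "\<dots> = ((pos y - pos x) mod 12 + (pos z - pos y) mod 12) mod 12" by (rule L12[symmetric])
  also have "\<dots> = (int (dd x y) + int (dd y z)) mod 12" using k by (simp add: dd12)
  also have "\<dots> = int ((dd x y + dd y z) mod 12)" by (simp add: of_nat_mod)
  finally show ?thesis by simp
qed

lemma trip: "(d::nat) < 12 \<Longrightarrow> int d mod 4 = int s mod 4 \<Longrightarrow> d \<in> set [s mod 4, s mod 4 + 4, s mod 4 + 8]"
proof -
  assume a: "d < 12" "int d mod 4 = int s mod 4"
  hence "int (d mod 4) = int (s mod 4)" by (simp add: of_nat_mod)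
  hence b: "d mod 4 = s mod 4" by simp
  have "d = d mod 4 \<or> d = d mod 4 + 4 \<or> d = d mod 4 + 8" using a(1) by presburger
  thus ?thesis using b by auto
qed

lemma lemA: "dd x z \<in> set (cands (kind x) (kind y) (kind z) (dd x y) (dd y z))"
proof -
  have c4: "int (dd x z) mod 4 = (int (dd x y) + int (dd y z)) mod 4" by (rule C4)
  show ?thesis
  proof (cases "kind x \<noteq> 2 \<and> kind y \<noteq> 2 \<and> kind z \<noteq> 2")
    case True thus ?thesis using C12 by (simp add: cands_def)
  next
    case F: False
    show ?thesis
    proof (cases "kind x = 2 \<or> kind z = 2")
      case True
      hence "int (dd x z) = int (dd x z) mod 4" using ddA by simp
      hence "int (dd x z) = int ((dd x y + dd y z) mod 4)" using c4 by (simp add: of_nat_mod)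
      thus ?thesis using True by (auto simp: cands_def)
    next
      case False
      thus ?thesis using F trip[OF dd_lt c4[unfolded of_nat_add[symmetric]]] by (simp add: cands_def)
    qed
  qed
qed

fun mk :: "nat \<Rightarrow> int \<Rightarrow> triad" where
  "mk k i = (if k = 0 then Maj (nat i) else if k = 1 then Min (nat i) else Aug (nat i))"

definition witp :: "nat \<Rightarrow> triad \<Rightarrow> triad \<Rightarrow> nat \<Rightarrow> nat \<Rightarrow> int" where
  "witp ky x z d1 d2 = (if ky = 2 then (pos x + int d1) mod 4
      else if kind x \<noteq> 2 then (pos x + int d1) mod 12
      else if kind z \<noteq> 2 then (pos z - int d2) mod 12 else (pos x + int d1) mod 4)"

definition wit :: "nat \<Rightarrow> triad \<Rightarrow> triad \<Rightarrow> nat \<Rightarrow> nat \<Rightarrow> triad" where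
  "wit ky x z d1 d2 = mk ky (witp ky x z d1 d2)"

lemma mk_props: "ky < 3 \<Longrightarrow> 0 \<le> i \<Longrightarrow> i < (if ky = 2 then 4 else 12) \<Longrightarrow>
  mk ky i \<in> H \<and> kind (mk ky i) = ky \<and> pos (mk ky i) = i"
  by (auto simp: mem_H pos_def)

lemma A1: "(((a::int) + d) mod m - a) mod m = d mod m"
  by (simp add: mod_diff_left_eq)
lemma A3: "((z::int) - (a + d) mod m) mod m = (z - a - d) mod m"
  by (simp add: mod_diff_right_eq diff_diff_eq)
lemma A2: "((z::int) - (z - d) mod m) mod m = d mod m"
  by (simp add: mod_diff_right_eq)
lemma A4: "((z::int) - w mod 12) mod 4 = (z - w) mod 4"
proof -
  have "(z - w mod 12) mod 4 = (z - w mod 12 mod 4) mod 4" by (simp add: mod_diff_right_eq)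
  also have "\<dots> = (z - w mod 4) mod 4" by (simp add: mod_mod_cancel)
  also have "\<dots> = (z - w) mod 4" by (simp add: mod_diff_right_eq)
  finally show ?thesis .
qed
lemma A5: "((w::int) mod 12 - a) mod 4 = (w - a) mod 4"
proof -
  have "(w mod 12 - a) mod 4 = (w mod 12 mod 4 - a) mod 4" by (simp add: mod_diff_left_eq)
  also have "\<dots> = (w mod 4 - a) mod 4" by (simp add: mod_mod_cancel)
  also have "\<dots> = (w - a) mod 4" by (simp add: mod_diff_left_eq)
  finally show ?thesis .
qed
lemma B1: "((z::int) - x) mod m = (d1 + d2) mod m \<Longrightarrow> (z - x - d1) mod m = d2 mod m"
proof -
  assume h: "(z - x) mod m = (d1 + d2) mod m"
  have "(z - x - d1) mod m = ((z - x) mod m - d1) mod m" by (simp add: mod_diff_left_eq)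
  also have "\<dots> = ((d1 + d2) mod m - d1) mod m" using h by simp
  also have "\<dots> = d2 mod m" by (simp add: mod_diff_left_eq)
  finally show ?thesis .
qed
lemma B2: "((z::int) - x) mod m = (d1 + d2) mod m \<Longrightarrow> (z - d2 - x) mod m = d1 mod m"
  using B1[of z x m d2 d1] by (simp add: algebra_simps)

lemma T4: "(d::nat) < 4 \<Longrightarrow> int d mod 4 = int d" by presburger
lemma T12: "(d::nat) < 12 \<Longrightarrow> int d mod 12 = int d" by presburger

lemma m8: "(a + 8) mod 4 = a mod (4::nat)"
proof -
  have "(a + 8) mod 4 = (a + 2 * 4) mod 4" by simp
  also have "\<dots> = a mod 4" by (rule mod_mult_self1)
  finally show ?thesis .
qed

lemma cands_mod4: "d \<in> set (cands kx ky kz d1 d2) \<Longrightarrow> d mod 4 = (d1 + d2) mod (4::nat)"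
  unfolding cands_def by (auto split: if_splits simp: mod_mod_cancel m8)

lemma lemB: assumes "ky < 3" "d1 < mo (kind x) ky" "d2 < mo ky (kind z)"
   "dd x z \<in> set (cands (kind x) ky (kind z) d1 d2)"
 shows "wit ky x z d1 d2 \<in> H \<and> kind (wit ky x z d1 d2) = ky \<and> dd x (wit ky x z d1 d2) = d1 \<and> dd (wit ky x z d1 d2) z = d2"
proof -
  let ?X = "pos x" and ?Z = "pos z" and ?p = "witp ky x z d1 d2"
  have c4: "(?Z - ?X) mod 4 = (int d1 + int d2) mod 4"
  proof -
    have "dd x z mod 4 = (d1 + d2) mod 4" by (rule cands_mod4[OF assms(4)])
    hence "int (dd x z) mod 4 = (int d1 + int d2) mod 4"
      by (metis of_nat_add of_nat_mod of_nat_numeral)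
    thus ?thesis using dd4 by simp
  qed
  have c12: "kind x \<noteq> 2 \<Longrightarrow> ky \<noteq> 2 \<Longrightarrow> kind z \<noteq> 2 \<Longrightarrow> (?Z - ?X) mod 12 = (int d1 + int d2) mod 12"
  proof -
    assume k: "kind x \<noteq> 2" "ky \<noteq> 2" "kind z \<noteq> 2"
    hence "int (dd x z) = (int d1 + int d2) mod 12" using assms(4) unfolding cands_def
      by (simp add: of_nat_mod)
    thus ?thesis using dd12 k by simp
  qed
  have rng: "0 \<le> ?p \<and> ?p < (if ky = 2 then 4 else 12)" unfolding witp_def by auto
  note M = mk_props[OF assms(1) conjunct1[OF rng] conjunct2[OF rng]]
  have w: "wit ky x z d1 d2 \<in> H" "kind (wit ky x z d1 d2) = ky" "pos (wit ky x z d1 d2) = ?p"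
    using M unfolding wit_def by auto
  have e: "(?p - ?X) mod (if kind x = 2 \<or> ky = 2 then 4 else 12) = int d1 \<and>
           (?Z - ?p) mod (if ky = 2 \<or> kind z = 2 then 4 else 12) = int d2"
  proof (cases "ky = 2")
    case True
    hence p: "?p = (?X + int d1) mod 4" unfolding witp_def by simp
    have d: "d1 < 4" "d2 < 4" using assms(2,3) True unfolding mo_def by auto
    show ?thesis using True p A1 A3 B1[OF c4] T4[OF d(1)] T4[OF d(2)] by simp
  next
    case kyF: False
    show ?thesis
    proof (cases "kind x = 2")
      case kxF: False
      hence p: "?p = (?X + int d1) mod 12" unfolding witp_def using kyF by simp
      have d1: "d1 < 12" using assms(2) kxF kyF unfolding mo_def by auto
      show ?thesis
      proof (cases "kind z = 2")
        case True
        have d2: "d2 < 4" using assms(3) True unfolding mo_def by auto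
        have "(?Z - ?p) mod 4 = (?Z - ?X - int d1) mod 4" unfolding p A4 by (simp add: diff_diff_eq)
        thus ?thesis using kyF kxF True p A1 B1[OF c4] T12[OF d1] T4[OF d2] by simp
      next
        case False
        have d2: "d2 < 12" using assms(3) False kyF unfolding mo_def by auto
        show ?thesis using kyF kxF False p A1 A3 B1[OF c12[OF kxF kyF False]] T12[OF d1] T12[OF d2] by simp
      qed
    next
      case kxT: True
      have d1: "d1 < 4" using assms(2) kxT unfolding mo_def by auto
      show ?thesis
      proof (cases "kind z = 2")
        case True
        hence p: "?p = (?X + int d1) mod 4" unfolding witp_def using kyF kxT by simp
        have d2: "d2 < 4" using assms(3) True unfolding mo_def by auto
        show ?thesis using kyF kxT True p A1 A3 B1[OF c4] T4[OF d1] T4[OF d2] by simp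
      next
        case False
        hence p: "?p = (?Z - int d2) mod 12" unfolding witp_def using kyF kxT by simp
        have d2: "d2 < 12" using assms(3) False kyF unfolding mo_def by auto
        have "(?p - ?X) mod 4 = (?Z - int d2 - ?X) mod 4" unfolding p A5 ..
        thus ?thesis using kyF kxT False p A2 B2[OF c4] T4[OF d1] T12[OF d2] by simp
      qed
    qed
  qed
  have e1: "dd x (wit ky x z d1 d2) = d1"
    using e unfolding dd_def w(2,3) by simp
  have e2: "dd (wit ky x z d1 d2) z = d2"
    using e unfolding dd_def w(2,3) by (simp add: disj_commute)
  show ?thesis using w e1 e2 by simp
qed

definition valid :: "(nat \<times> nat \<times> nat) set \<Rightarrow> bool" where
  "valid K = (\<forall>(a,b,d)\<in>K. b < 3 \<and> d < mo a b)"

lemma kind_H: "kind x < 3" by (cases x) auto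

lemma comp_Rel:
  assumes vR: "valid R" and vQ: "valid Q"
  and a: "\<forall>(kx,ky,d1)\<in>R. \<forall>(ky',kz,d2)\<in>Q. ky = ky' \<longrightarrow> (\<forall>d\<in>set (cands kx ky kz d1 d2). (kx,kz,d) \<in> P)"
  and b: "\<forall>(kx,kz,d)\<in>P. \<exists>(kx',ky,d1)\<in>R. \<exists>(ky',kz',d2)\<in>Q. kx' = kx \<and> ky' = ky \<and> kz' = kz \<and> d \<in> set (cands kx ky kz d1 d2)"
  shows "Rel R O Rel Q = Rel P"
proof (intro set_eqI iffI)
  fix p assume "p \<in> Rel R O Rel Q"
  then obtain x y z where p: "p = (x,z)" and xy: "x \<in> H" "y \<in> H" "z \<in> H" "key x y \<in> R" "key y z \<in> Q"
    unfolding Rel_def by auto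
  have 1: "\<forall>(ky',kz,d2)\<in>Q. kind y = ky' \<longrightarrow> (\<forall>d\<in>set (cands (kind x) (kind y) kz (dd x y) d2). (kind x,kz,d) \<in> P)"
    using bspec[OF a xy(4)[unfolded key_dd[OF xy(1)]]] by simp
  have 2: "\<forall>d\<in>set (cands (kind x) (kind y) (kind z) (dd x y) (dd y z)). (kind x,kind z,d) \<in> P"
    using bspec[OF 1 xy(5)[unfolded key_dd[OF xy(2)]]] by simp
  have "(kind x, kind z, dd x z) \<in> P"
    using bspec[OF 2 lemA] .
  thus "p \<in> Rel P" using p xy by (simp add: Rel_mem)
next
  fix p assume "p \<in> Rel P"
  then obtain x z where p: "p = (x,z)" and xz: "x \<in> H" "z \<in> H" "(kind x, kind z, dd x z) \<in> P"
    by (cases p) (auto simp: Rel_mem)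
  have "\<exists>(kx',ky,d1)\<in>R. \<exists>(ky',kz',d2)\<in>Q. kx' = kind x \<and> ky' = ky \<and> kz' = kind z \<and> dd x z \<in> set (cands (kind x) ky (kind z) d1 d2)"
    using bspec[OF b xz(3)] by simp
  then obtain ky d1 d2 where r: "(kind x, ky, d1) \<in> R" and q: "(ky, kind z, d2) \<in> Q"
     and c: "dd x z \<in> set (cands (kind x) ky (kind z) d1 d2)" by blast
  have v: "ky < 3" "d1 < mo (kind x) ky" "d2 < mo ky (kind z)"
    using bspec[OF vR[unfolded valid_def] r] bspec[OF vQ[unfolded valid_def] q] by simp_all
  note B = lemB[OF v c]
  have 1: "(x, wit ky x z d1 d2) \<in> Rel R" using xz B r by (simp add: Rel_mem)
  have 2: "(wit ky x z d1 d2, z) \<in> Rel Q" using xz B q by (simp add: Rel_mem)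
  show "p \<in> Rel R O Rel Q" using relcompI[OF 1 2] p by simp
qed

lemma comp_Rel2:
  assumes vR: "valid R" and vQ: "valid Q"
  and a: "\<forall>(kx,ky,d1)\<in>R. \<forall>(ky',kz,d2)\<in>Q. ky = ky' \<longrightarrow> (\<forall>d\<in>set (cands kx ky kz d1 d2). (kx,kz,d) \<in> set PL)"
  and w: "\<forall>(kx,kz,d,ky,d1,d2)\<in>set W. (kx,ky,d1) \<in> R \<and> (ky,kz,d2) \<in> Q \<and> d \<in> set (cands kx ky kz d1 d2)"
  and m: "map (\<lambda>(kx,kz,d,ky,d1,d2). (kx,kz,d)) W = PL"
  shows "Rel R O Rel Q = Rel (set PL)"
proof (rule comp_Rel[OF vR vQ a])
  show "\<forall>(kx,kz,d)\<in>set PL. \<exists>(kx',ky,d1)\<in>R. \<exists>(ky',kz',d2)\<in>Q. kx' = kx \<and> ky' = ky \<and> kz' = kz \<and> d \<in> set (cands kx ky kz d1 d2)"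
  proof
    fix t assume "t \<in> set PL"
    then obtain u where u: "u \<in> set W" "t = (\<lambda>(kx,kz,d,ky,d1,d2). (kx,kz,d)) u"
      unfolding m[symmetric] by auto
    obtain kx kz d ky d1 d2 where uu: "u = (kx,kz,d,ky,d1,d2)" by (cases u) auto
    have "(kx,ky,d1) \<in> R \<and> (ky,kz,d2) \<in> Q \<and> d \<in> set (cands kx ky kz d1 d2)"
      using bspec[OF w u(1)] uu by simp
    thus "case t of (kx,kz,d) \<Rightarrow> \<exists>(kx',ky,d1)\<in>R. \<exists>(ky',kz',d2)\<in>Q. kx' = kx \<and> ky' = ky \<and> kz' = kz \<and> d \<in> set (cands kx ky kz d1 d2)"
      using u(2) uu by fastforce
  qed
qed

definition KIl :: "(nat \<times> nat \<times> nat) list" where "KIl = [(0,0,0), (1,1,0), (2,2,0)]"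
definition KI :: "(nat \<times> nat \<times> nat) set" where "KI = set KIl"
definition KSl :: "(nat \<times> nat \<times> nat) list" where "KSl = [(0,1,0), (0,1,4), (0,2,0), (1,0,0), (1,0,8), (1,2,3), (2,0,0), (2,1,1)]"
definition KS :: "(nat \<times> nat \<times> nat) set" where "KS = set KSl"
definition KTl :: "(nat \<times> nat \<times> nat) list" where "KTl = [(0,0,4), (0,0,8), (0,1,1), (0,1,5), (0,2,3), (1,0,7), (1,0,11), (1,1,4), (1,1,8), (1,2,0), (2,0,1), (2,1,0)]"
definition KT :: "(nat \<times> nat \<times> nat) set" where "KT = set KTl"
definition KSSl :: "(nat \<times> nat \<times> nat) list" where "KSSl = [(0,0,0), (0,0,4), (0,0,8), (0,1,1), (0,1,5), (0,1,9), (0,2,3), (1,0,3), (1,0,7), (1,0,11), (1,1,0), (1,1,4), (1,1,8), (1,2,0), (2,0,1), (2,1,0), (2,2,0)]"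
definition KSS :: "(nat \<times> nat \<times> nat) set" where "KSS = set KSSl"
definition KSTl :: "(nat \<times> nat \<times> nat) list" where "KSTl = [(0,0,1), (0,0,3), (0,0,5), (0,0,7), (0,0,9), (0,0,11), (0,1,0), (0,1,4), (0,1,8), (0,2,0), (1,0,0), (1,0,4), (1,0,8), (1,1,1), (1,1,3), (1,1,5), (1,1,7), (1,1,9), (1,1,11), (1,2,3), (2,0,0), (2,1,1), (2,2,1), (2,2,3)]"
definition KST :: "(nat \<times> nat \<times> nat) set" where "KST = set KSTl"
definition KTTl :: "(nat \<times> nat \<times> nat) list" where "KTTl = [(0,0,0), (0,0,4), (0,0,8), (0,1,1), (0,1,3), (0,1,5), (0,1,7), (0,1,9), (0,1,11), (0,2,1), (0,2,3), (1,0,1), (1,0,3), (1,0,5), (1,0,7), (1,0,9), (1,0,11), (1,1,0), (1,1,4), (1,1,8), (1,2,0), (1,2,2), (2,0,1), (2,0,3), (2,1,0), (2,1,2), (2,2,0)]"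
definition KTT :: "(nat \<times> nat \<times> nat) set" where "KTT = set KTTl"
definition KSTTl :: "(nat \<times> nat \<times> nat) list" where "KSTTl = [(0,0,1), (0,0,3), (0,0,5), (0,0,7), (0,0,9), (0,0,11), (0,1,0), (0,1,2), (0,1,4), (0,1,6), (0,1,8), (0,1,10), (0,2,0), (0,2,2), (1,0,0), (1,0,2), (1,0,4), (1,0,6), (1,0,8), (1,0,10), (1,1,1), (1,1,3), (1,1,5), (1,1,7), (1,1,9), (1,1,11), (1,2,1), (1,2,3), (2,0,0), (2,0,2), (2,1,1), (2,1,3), (2,2,1), (2,2,3)]"
definition KSTT :: "(nat \<times> nat \<times> nat) set" where "KSTT = set KSTTl"
definition KTTTl :: "(nat \<times> nat \<times> nat) list" where "KTTTl = [(0,0,0), (0,0,2), (0,0,4), (0,0,6), (0,0,8), (0,0,10), (0,1,1), (0,1,3), (0,1,5), (0,1,7), (0,1,9), (0,1,11), (0,2,1), (0,2,3), (1,0,1), (1,0,3), (1,0,5), (1,0,7), (1,0,9), (1,0,11), (1,1,0), (1,1,2), (1,1,4), (1,1,6), (1,1,8), (1,1,10), (1,2,0), (1,2,2), (2,0,1), (2,0,3), (2,1,0), (2,1,2), (2,2,0), (2,2,2)]"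
definition KTTT :: "(nat \<times> nat \<times> nat) set" where "KTTT = set KTTTl"



definition W_S_I :: "(nat \<times> nat \<times> nat \<times> nat \<times> nat \<times> nat) list" where "W_S_I = [(0,1,0,0,0,0), (0,1,4,0,0,4), (0,2,0,0,0,0), (1,0,0,1,0,0), (1,0,8,1,0,8), (1,2,3,1,0,3), (2,0,0,2,0,0), (2,1,1,2,0,1)]"
definition W_S_S :: "(nat \<times> nat \<times> nat \<times> nat \<times> nat \<times> nat) list" where "W_S_S = [(0,0,0,1,0,0), (0,0,4,1,4,0), (0,0,8,1,0,8), (0,1,1,2,0,1), (0,1,5,2,0,1), (0,1,9,2,0,1), (0,2,3,1,0,3), (1,0,3,2,3,0), (1,0,7,2,3,0), (1,0,11,2,3,0), (1,1,0,0,0,0), (1,1,4,0,0,4), (1,1,8,0,8,0), (1,2,0,0,0,0), (2,0,1,1,1,0), (2,1,0,0,0,0), (2,2,0,0,0,0)]"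
definition W_S_T :: "(nat \<times> nat \<times> nat \<times> nat \<times> nat \<times> nat) list" where "W_S_T = [(0,0,1,1,1,0), (0,0,3,2,3,0), (0,0,5,1,5,0), (0,0,7,2,3,0), (0,0,9,1,1,8), (0,0,11,2,3,0), (0,1,0,0,8,4), (0,1,4,0,4,0), (0,1,8,0,4,4), (0,2,0,0,4,0), (1,0,0,1,4,8), (1,0,4,1,4,0), (1,0,8,1,8,0), (1,1,1,2,0,1), (1,1,3,0,11,4), (1,1,5,2,0,1), (1,1,7,0,7,0), (1,1,9,2,0,1), (1,1,11,0,7,4), (1,2,3,0,7,0), (2,0,0,1,0,0), (2,1,1,0,1,0), (2,2,1,0,1,0), (2,2,3,1,0,3)]"
definition W_S_SS :: "(nat \<times> nat \<times> nat \<times> nat \<times> nat \<times> nat) list" where "W_S_SS = [(0,0,1,1,1,0), (0,0,3,2,3,0), (0,0,5,1,5,0), (0,0,7,2,3,0), (0,0,9,1,1,8), (0,0,11,2,3,0), (0,1,0,0,0,0), (0,1,4,0,0,4), (0,1,8,0,4,4), (0,2,0,0,0,0), (1,0,0,1,0,0), (1,0,4,1,4,0), (1,0,8,1,0,8), (1,1,1,2,0,1), (1,1,3,0,3,0), (1,1,5,2,0,1), (1,1,7,0,3,4), (1,1,9,2,0,1), (1,1,11,0,7,4), (1,2,3,0,3,0), (2,0,0,1,0,0), (2,1,1,0,1,0), (2,2,1,0,1,0), (2,2,3,1,0,3)]"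
definition W_S_ST :: "(nat \<times> nat \<times> nat \<times> nat \<times> nat \<times> nat) list" where "W_S_ST = [(0,0,0,1,0,0), (0,0,4,1,4,0), (0,0,8,1,0,8), (0,1,1,0,1,0), (0,1,3,0,3,0), (0,1,5,0,1,4), (0,1,7,0,3,4), (0,1,9,0,5,4), (0,1,11,0,7,4), (0,2,1,0,1,0), (0,2,3,0,3,0), (1,0,1,1,1,0), (1,0,3,1,3,0), (1,0,5,1,5,0), (1,0,7,1,7,0), (1,0,9,1,1,8), (1,0,11,1,3,8), (1,1,0,0,0,0), (1,1,4,0,0,4), (1,1,8,0,4,4), (1,2,0,0,0,0), (1,2,2,1,3,3), (2,0,1,1,1,0), (2,0,3,2,3,0), (2,1,0,0,0,0), (2,1,2,2,1,1), (2,2,0,0,0,0)]"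
definition W_S_TT :: "(nat \<times> nat \<times> nat \<times> nat \<times> nat \<times> nat) list" where "W_S_TT = [(0,0,1,1,1,0), (0,0,3,1,3,0), (0,0,5,1,5,0), (0,0,7,1,7,0), (0,0,9,1,1,8), (0,0,11,1,3,8), (0,1,0,0,0,0), (0,1,2,2,1,1), (0,1,4,0,0,4), (0,1,6,2,1,1), (0,1,8,0,4,4), (0,1,10,2,1,1), (0,2,0,0,0,0), (0,2,2,1,3,3), (1,0,0,1,0,0), (1,0,2,2,2,0), (1,0,4,1,4,0), (1,0,6,2,2,0), (1,0,8,1,0,8), (1,0,10,2,2,0), (1,1,1,0,1,0), (1,1,3,0,3,0), (1,1,5,0,1,4), (1,1,7,0,3,4), (1,1,9,0,5,4), (1,1,11,0,7,4), (1,2,1,0,1,0), (1,2,3,0,3,0), (2,0,0,1,0,0), (2,0,2,1,2,0), (2,1,1,0,1,0), (2,1,3,0,3,0), (2,2,1,0,1,0), (2,2,3,0,3,0)]"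
definition W_S_STT :: "(nat \<times> nat \<times> nat \<times> nat \<times> nat \<times> nat) list" where "W_S_STT = [(0,0,0,1,0,0), (0,0,2,1,2,0), (0,0,4,1,4,0), (0,0,6,1,6,0), (0,0,8,1,0,8), (0,0,10,1,2,8), (0,1,1,0,1,0), (0,1,3,0,3,0), (0,1,5,0,1,4), (0,1,7,0,3,4), (0,1,9,0,5,4), (0,1,11,0,7,4), (0,2,1,0,1,0), (0,2,3,0,3,0), (1,0,1,1,1,0), (1,0,3,1,3,0), (1,0,5,1,5,0), (1,0,7,1,7,0), (1,0,9,1,1,8), (1,0,11,1,3,8), (1,1,0,0,0,0), (1,1,2,0,2,0), (1,1,4,0,0,4), (1,1,6,0,2,4), (1,1,8,0,4,4), (1,1,10,0,6,4), (1,2,0,0,0,0), (1,2,2,0,2,0), (2,0,1,1,1,0), (2,0,3,1,3,0), (2,1,0,0,0,0), (2,1,2,0,2,0), (2,2,0,0,0,0), (2,2,2,0,2,0)]"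
definition W_S_TTT :: "(nat \<times> nat \<times> nat \<times> nat \<times> nat \<times> nat) list" where "W_S_TTT = [(0,0,1,1,1,0), (0,0,3,1,3,0), (0,0,5,1,5,0), (0,0,7,1,7,0), (0,0,9,1,1,8), (0,0,11,1,3,8), (0,1,0,0,0,0), (0,1,2,0,2,0), (0,1,4,0,0,4), (0,1,6,0,2,4), (0,1,8,0,4,4), (0,1,10,0,6,4), (0,2,0,0,0,0), (0,2,2,0,2,0), (1,0,0,1,0,0), (1,0,2,1,2,0), (1,0,4,1,4,0), (1,0,6,1,6,0), (1,0,8,1,0,8), (1,0,10,1,2,8), (1,1,1,0,1,0), (1,1,3,0,3,0), (1,1,5,0,1,4), (1,1,7,0,3,4), (1,1,9,0,5,4), (1,1,11,0,7,4), (1,2,1,0,1,0), (1,2,3,0,3,0), (2,0,0,1,0,0), (2,0,2,1,2,0), (2,1,1,0,1,0), (2,1,3,0,3,0), (2,2,1,0,1,0), (2,2,3,0,3,0)]"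
definition W_T_I :: "(nat \<times> nat \<times> nat \<times> nat \<times> nat \<times> nat) list" where "W_T_I = [(0,0,4,0,0,4), (0,0,8,0,0,8), (0,1,1,0,0,1), (0,1,5,0,0,5), (0,2,3,0,0,3), (1,0,7,1,0,7), (1,0,11,1,0,11), (1,1,4,1,0,4), (1,1,8,1,0,8), (1,2,0,1,0,0), (2,0,1,2,0,1), (2,1,0,2,0,0)]"
definition W_T_S :: "(nat \<times> nat \<times> nat \<times> nat \<times> nat \<times> nat) list" where "W_T_S = [(0,0,1,2,0,1), (0,0,3,1,4,11), (0,0,5,2,0,1), (0,0,7,1,0,7), (0,0,9,2,0,1), (0,0,11,1,0,11), (0,1,0,1,4,8), (0,1,4,1,0,4), (0,1,8,1,0,8), (0,2,0,1,0,0), (1,0,0,0,8,4), (1,0,4,0,0,4), (1,0,8,0,0,8), (1,1,1,0,0,1), (1,1,3,2,3,0), (1,1,5,0,0,5), (1,1,7,2,3,0), (1,1,9,0,8,1), (1,1,11,2,3,0), (1,2,3,0,0,3), (2,0,0,0,0,4), (2,1,1,0,0,1), (2,2,1,1,1,0), (2,2,3,0,0,3)]"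
definition W_T_T :: "(nat \<times> nat \<times> nat \<times> nat \<times> nat \<times> nat) list" where "W_T_T = [(0,0,0,0,4,8), (0,0,4,0,8,8), (0,0,8,0,4,4), (0,1,1,0,8,5), (0,1,3,2,3,0), (0,1,5,0,4,1), (0,1,7,2,3,0), (0,1,9,0,4,5), (0,1,11,2,3,0), (0,2,1,1,1,0), (0,2,3,0,4,3), (1,0,1,2,0,1), (1,0,3,0,7,8), (1,0,5,2,0,1), (1,0,7,0,11,8), (1,0,9,2,0,1), (1,0,11,0,7,4), (1,1,0,0,7,5), (1,1,4,0,11,5), (1,1,8,0,7,1), (1,2,0,1,4,0), (1,2,2,0,7,3), (2,0,1,0,1,4), (2,0,3,1,0,7), (2,1,0,1,0,4), (2,1,2,0,1,1), (2,2,0,0,1,3)]"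
definition W_T_SS :: "(nat \<times> nat \<times> nat \<times> nat \<times> nat \<times> nat) list" where "W_T_SS = [(0,0,0,0,4,8), (0,0,4,0,0,4), (0,0,8,0,0,8), (0,1,1,0,0,1), (0,1,3,2,3,0), (0,1,5,0,0,5), (0,1,7,2,3,0), (0,1,9,0,4,5), (0,1,11,2,3,0), (0,2,1,1,1,0), (0,2,3,0,0,3), (1,0,1,2,0,1), (1,0,3,0,7,8), (1,0,5,2,0,1), (1,0,7,0,3,4), (1,0,9,2,0,1), (1,0,11,0,3,8), (1,1,0,0,7,5), (1,1,4,0,3,1), (1,1,8,0,3,5), (1,2,0,1,0,0), (1,2,2,0,3,3), (2,0,1,0,1,4), (2,0,3,1,0,7), (2,1,0,1,0,4), (2,1,2,0,1,1), (2,2,0,0,1,3)]"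
definition W_T_ST :: "(nat \<times> nat \<times> nat \<times> nat \<times> nat \<times> nat) list" where "W_T_ST = [(0,0,1,0,5,8), (0,0,3,0,7,8), (0,0,5,0,1,4), (0,0,7,0,3,4), (0,0,9,0,1,8), (0,0,11,0,3,8), (0,1,0,0,7,5), (0,1,2,0,1,1), (0,1,4,0,3,1), (0,1,6,0,1,5), (0,1,8,0,3,5), (0,1,10,0,5,5), (0,2,0,0,1,3), (0,2,2,0,3,3), (1,0,0,0,4,8), (1,0,2,1,3,11), (1,0,4,0,0,4), (1,0,6,1,7,11), (1,0,8,0,0,8), (1,0,10,1,3,7), (1,1,1,0,0,1), (1,1,3,1,7,8), (1,1,5,0,0,5), (1,1,7,1,3,4), (1,1,9,0,4,5), (1,1,11,1,3,8), (1,2,1,1,1,0), (1,2,3,0,0,3), (2,0,0,0,0,4), (2,0,2,2,1,1), (2,1,1,0,0,1), (2,1,3,2,3,0), (2,2,1,1,1,0), (2,2,3,0,0,3)]"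
definition W_T_TT :: "(nat \<times> nat \<times> nat \<times> nat \<times> nat \<times> nat) list" where "W_T_TT = [(0,0,0,0,4,8), (0,0,2,1,3,11), (0,0,4,0,0,4), (0,0,6,1,7,11), (0,0,8,0,0,8), (0,0,10,1,3,7), (0,1,1,0,0,1), (0,1,3,1,7,8), (0,1,5,0,0,5), (0,1,7,1,3,4), (0,1,9,0,4,5), (0,1,11,1,3,8), (0,2,1,1,1,0), (0,2,3,0,0,3), (1,0,1,0,5,8), (1,0,3,0,7,8), (1,0,5,0,1,4), (1,0,7,0,3,4), (1,0,9,0,1,8), (1,0,11,0,3,8), (1,1,0,0,7,5), (1,1,2,0,1,1), (1,1,4,0,3,1), (1,1,6,0,1,5), (1,1,8,0,3,5), (1,1,10,0,5,5), (1,2,0,0,1,3), (1,2,2,0,3,3), (2,0,1,0,1,4), (2,0,3,0,3,4), (2,1,0,0,3,1), (2,1,2,0,1,1), (2,2,0,0,1,3), (2,2,2,0,3,3)]"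
definition W_T_STT :: "(nat \<times> nat \<times> nat \<times> nat \<times> nat \<times> nat) list" where "W_T_STT = [(0,0,1,0,5,8), (0,0,3,0,7,8), (0,0,5,0,1,4), (0,0,7,0,3,4), (0,0,9,0,1,8), (0,0,11,0,3,8), (0,1,0,0,7,5), (0,1,2,0,1,1), (0,1,4,0,3,1), (0,1,6,0,1,5), (0,1,8,0,3,5), (0,1,10,0,5,5), (0,2,0,0,1,3), (0,2,2,0,3,3), (1,0,0,0,4,8), (1,0,2,0,6,8), (1,0,4,0,0,4), (1,0,6,0,2,4), (1,0,8,0,0,8), (1,0,10,0,2,8), (1,1,1,0,0,1), (1,1,3,0,2,1), (1,1,5,0,0,5), (1,1,7,0,2,5), (1,1,9,0,4,5), (1,1,11,0,6,5), (1,2,1,0,2,3), (1,2,3,0,0,3), (2,0,0,0,0,4), (2,0,2,0,2,4), (2,1,1,0,0,1), (2,1,3,0,2,1), (2,2,1,0,2,3), (2,2,3,0,0,3)]"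
definition W_T_TTT :: "(nat \<times> nat \<times> nat \<times> nat \<times> nat \<times> nat) list" where "W_T_TTT = [(0,0,0,0,4,8), (0,0,2,0,6,8), (0,0,4,0,0,4), (0,0,6,0,2,4), (0,0,8,0,0,8), (0,0,10,0,2,8), (0,1,1,0,0,1), (0,1,3,0,2,1), (0,1,5,0,0,5), (0,1,7,0,2,5), (0,1,9,0,4,5), (0,1,11,0,6,5), (0,2,1,0,2,3), (0,2,3,0,0,3), (1,0,1,0,5,8), (1,0,3,0,7,8), (1,0,5,0,1,4), (1,0,7,0,3,4), (1,0,9,0,1,8), (1,0,11,0,3,8), (1,1,0,0,7,5), (1,1,2,0,1,1), (1,1,4,0,3,1), (1,1,6,0,1,5), (1,1,8,0,3,5), (1,1,10,0,5,5), (1,2,0,0,1,3), (1,2,2,0,3,3), (2,0,1,0,1,4), (2,0,3,0,3,4), (2,1,0,0,3,1), (2,1,2,0,1,1), (2,2,0,0,1,3), (2,2,2,0,3,3)]"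



lemma comp_S_I: "Rel KI O Rel KS = Rel KS"
  unfolding KS_def by (rule comp_Rel2[where W=W_S_I]) (simp_all add: valid_def mo_def cands_def KI_def KS_def KIl_def KSl_def KSl_def W_S_I_def)

lemma comp_S_S: "Rel KS O Rel KS = Rel KSS"
  unfolding KSS_def by (rule comp_Rel2[where W=W_S_S]) (simp_all add: valid_def mo_def cands_def KS_def KS_def KSl_def KSl_def KSSl_def W_S_S_def)

lemma comp_S_T: "Rel KT O Rel KS = Rel KST"
  unfolding KST_def by (rule comp_Rel2[where W=W_S_T]) (simp_all add: valid_def mo_def cands_def KT_def KS_def KTl_def KSl_def KSTl_def W_S_T_def)

lemma comp_S_SS: "Rel KSS O Rel KS = Rel KST"
  unfolding KST_def by (rule comp_Rel2[where W=W_S_SS]) (simp_all add: valid_def mo_def cands_def KSS_def KS_def KSSl_def KSl_def KSTl_def W_S_SS_def)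

lemma comp_S_ST: "Rel KST O Rel KS = Rel KTT"
  unfolding KTT_def by (rule comp_Rel2[where W=W_S_ST]) (simp_all add: valid_def mo_def cands_def KST_def KS_def KSTl_def KSl_def KTTl_def W_S_ST_def)

lemma comp_S_TT: "Rel KTT O Rel KS = Rel KSTT"
  unfolding KSTT_def by (rule comp_Rel2[where W=W_S_TT]) (simp_all add: valid_def mo_def cands_def KTT_def KS_def KTTl_def KSl_def KSTTl_def W_S_TT_def)

lemma comp_S_STT: "Rel KSTT O Rel KS = Rel KTTT"
  unfolding KTTT_def by (rule comp_Rel2[where W=W_S_STT]) (simp_all add: valid_def mo_def cands_def KSTT_def KS_def KSTTl_def KSl_def KTTTl_def W_S_STT_def)

lemma comp_S_TTT: "Rel KTTT O Rel KS = Rel KSTT"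
  unfolding KSTT_def by (rule comp_Rel2[where W=W_S_TTT]) (simp_all add: valid_def mo_def cands_def KTTT_def KS_def KTTTl_def KSl_def KSTTl_def W_S_TTT_def)

lemma comp_T_I: "Rel KI O Rel KT = Rel KT"
  unfolding KT_def by (rule comp_Rel2[where W=W_T_I]) (simp_all add: valid_def mo_def cands_def KI_def KT_def KIl_def KTl_def KTl_def W_T_I_def)

lemma comp_T_S: "Rel KS O Rel KT = Rel KST"
  unfolding KST_def by (rule comp_Rel2[where W=W_T_S]) (simp_all add: valid_def mo_def cands_def KS_def KT_def KSl_def KTl_def KSTl_def W_T_S_def)

lemma comp_T_T: "Rel KT O Rel KT = Rel KTT"
  unfolding KTT_def by (rule comp_Rel2[where W=W_T_T]) (simp_all add: valid_def mo_def cands_def KT_def KT_def KTl_def KTl_def KTTl_def W_T_T_def)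

lemma comp_T_SS: "Rel KSS O Rel KT = Rel KTT"
  unfolding KTT_def by (rule comp_Rel2[where W=W_T_SS]) (simp_all add: valid_def mo_def cands_def KSS_def KT_def KSSl_def KTl_def KTTl_def W_T_SS_def)

lemma comp_T_ST: "Rel KST O Rel KT = Rel KSTT"
  unfolding KSTT_def by (rule comp_Rel2[where W=W_T_ST]) (simp_all add: valid_def mo_def cands_def KST_def KT_def KSTl_def KTl_def KSTTl_def W_T_ST_def)

lemma comp_T_TT: "Rel KTT O Rel KT = Rel KTTT"
  unfolding KTTT_def by (rule comp_Rel2[where W=W_T_TT]) (simp_all add: valid_def mo_def cands_def KTT_def KT_def KTTl_def KTl_def KTTTl_def W_T_TT_def)

lemma comp_T_STT: "Rel KSTT O Rel KT = Rel KSTT"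
  unfolding KSTT_def by (rule comp_Rel2[where W=W_T_STT]) (simp_all add: valid_def mo_def cands_def KSTT_def KT_def KSTTl_def KTl_def KSTTl_def W_T_STT_def)

lemma comp_T_TTT: "Rel KTTT O Rel KT = Rel KTTT"
  unfolding KTTT_def by (rule comp_Rel2[where W=W_T_TTT]) (simp_all add: valid_def mo_def cands_def KTTT_def KT_def KTTTl_def KTl_def KTTTl_def W_T_TTT_def)



lemma all12: "(\<forall>n<(12::nat). P n) \<longleftrightarrow> P 0 \<and> P 1 \<and> P 2 \<and> P 3 \<and> P 4 \<and> P 5 \<and> P 6 \<and> P 7 \<and> P 8 \<and> P 9 \<and> P 10 \<and> (P 11 :: bool)"
  by (auto dest!: lt12)

lemma R1: "x \<in> H \<Longrightarrow> z \<in> H \<Longrightarrow> kind x \<noteq> 2 \<or> kind z = 2 \<Longrightarrow>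
   z = mk (kind z) ((pos x + int (dd x z)) mod (if kind z = 2 then 4 else 12))"
proof -
  assume h: "x \<in> H" "z \<in> H" "kind x \<noteq> 2 \<or> kind z = 2"
  have e: "\<And>a b m. ((a::int) + (b - a) mod m) mod m = b mod m" by (simp add: mod_add_right_eq)
  have p: "0 \<le> pos z" "pos z < (if kind z = 2 then 4 else 12)" using h(2) by (cases z; simp add: pos_def mem_H)+
  have "int (dd x z) = (pos z - pos x) mod (if kind z = 2 then 4 else 12)"
    unfolding dd_def using h(3) by auto
  hence "(pos x + int (dd x z)) mod (if kind z = 2 then 4 else 12) = pos z"
    using e p by simp
  thus ?thesis using h(2) by (cases z) (auto simp: pos_def)
qed

lemma R2: "x \<in> H \<Longrightarrow> kind x = 2 \<Longrightarrow> kind z \<noteq> 2 \<Longrightarrow> x = Aug (nat ((pos z - int (dd x z)) mod 4))"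
proof -
  assume h: "x \<in> H" "kind x = 2" "kind z \<noteq> 2"
  have e: "\<And>a b m. ((b::int) - (b - a) mod m) mod m = a mod m" by (simp add: mod_diff_right_eq)
  have p: "0 \<le> pos x" "pos x < 4" using h by (cases x; simp add: pos_def mem_H)+
  have "int (dd x z) = (pos z - pos x) mod 4"
    unfolding dd_def using h by auto
  hence "(pos z - int (dd x z)) mod 4 = pos x"
    using e p by simp
  thus ?thesis using h by (cases x) (auto simp: pos_def)
qed

lemma Rel_sub:
  assumes a1: "\<forall>x\<in>H. \<forall>(kx,kz,d)\<in>K. kx = kind x \<longrightarrow> (kx \<noteq> 2 \<or> kz = 2) \<longrightarrow>
      (x, mk kz ((pos x + int d) mod (if kz = 2 then 4 else 12))) \<in> S"
  and a2: "\<forall>z\<in>H. \<forall>(kx,kz,d)\<in>K. kz = kind z \<longrightarrow> kx = 2 \<longrightarrow> kz \<noteq> 2 \<longrightarrow>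
      (Aug (nat ((pos z - int d) mod 4)), z) \<in> S"
  shows "Rel K \<subseteq> S"
proof
  fix p assume "p \<in> Rel K"
  then obtain x z where p: "p = (x,z)" "x \<in> H" "z \<in> H" "(kind x, kind z, dd x z) \<in> K"
    by (cases p) (auto simp: Rel_mem)
  show "p \<in> S"
  proof (cases "kind x \<noteq> 2 \<or> kind z = 2")
    case True
    have "(x, mk (kind z) ((pos x + int (dd x z)) mod (if kind z = 2 then 4 else 12))) \<in> S"
      using bspec[OF bspec[OF a1 p(2)] p(4)] True by simp
    thus ?thesis using R1[OF p(2,3) True] p(1) by simp
  next
    case False
    have "(Aug (nat ((pos z - int (dd x z)) mod 4)), z) \<in> S"
      using bspec[OF bspec[OF a2 p(3)] p(4)] False by simp
    thus ?thesis using R2[OF p(2)] False p(1) by simp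
  qed
qed

lemma S_base_U: "S_base = (\<Union>n\<in>{..<12}. {(Maj n, Min n), (Maj n, Min ((n + 4) mod 12)), (Maj n, Aug (n mod 4)),
   (Min n, Maj n), (Min n, Maj ((n + 8) mod 12)), (Min n, Aug ((n + 3) mod 4))})"
  unfolding S_base_def by blast

lemma S_sub: "S_rel \<subseteq> Rel KS"
proof -
  have "\<forall>n<12. \<forall>p \<in> {(Maj n, Min n), (Maj n, Min ((n + 4) mod 12)), (Maj n, Aug (n mod 4)),
   (Min n, Maj n), (Min n, Maj ((n + 8) mod 12)), (Min n, Aug ((n + 3) mod 4))}. p \<in> Rel KS \<and> prod.swap p \<in> Rel KS"
    unfolding all12 by (simp add: Rel_mem mem_H dd_def pos_def KS_def KSl_def)
  thus ?thesis unfolding S_rel_def S_base_U by fastforce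
qed

lemma S_sup: "Rel KS \<subseteq> S_rel"
  by (rule Rel_sub) (simp_all add: H_list KS_def KSl_def pos_def S_rel_def S_base_def)


lemma T_base_U: "T_base = (\<Union>n\<in>{..<12}. {(Maj n, Maj ((n + 4) mod 12)), (Maj n, Maj ((n + 8) mod 12)),
   (Maj n, Min ((n + 1) mod 12)), (Maj n, Min ((n + 5) mod 12)), (Maj n, Aug ((n + 3) mod 4)),
   (Min n, Min ((n + 4) mod 12)), (Min n, Min ((n + 8) mod 12)), (Min n, Maj ((n + 11) mod 12)),
   (Min n, Maj ((n + 7) mod 12)), (Min n, Aug (n mod 4))})"
  unfolding T_base_def by blast

lemma T_sub: "T_rel \<subseteq> Rel KT"
proof -
  have "\<forall>n<12. \<forall>p \<in> {(Maj n, Maj ((n + 4) mod 12)), (Maj n, Maj ((n + 8) mod 12)),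
   (Maj n, Min ((n + 1) mod 12)), (Maj n, Min ((n + 5) mod 12)), (Maj n, Aug ((n + 3) mod 4)),
   (Min n, Min ((n + 4) mod 12)), (Min n, Min ((n + 8) mod 12)), (Min n, Maj ((n + 11) mod 12)),
   (Min n, Maj ((n + 7) mod 12)), (Min n, Aug (n mod 4))}. p \<in> Rel KT \<and> prod.swap p \<in> Rel KT"
    unfolding all12 by (simp add: Rel_mem mem_H dd_def pos_def KT_def KTl_def)
  thus ?thesis unfolding T_rel_def T_base_U by fastforce
qed

lemma T_sup: "Rel KT \<subseteq> T_rel"
  by (rule Rel_sub) (simp_all add: H_list KT_def KTl_def pos_def T_rel_def T_base_def)

lemma S_eq: "S_rel = Rel KS" using S_sub S_sup by blast
lemma T_eq: "T_rel = Rel KT" using T_sub T_sup by blast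

lemma idon: "(a,b) \<in> Id_on A \<longleftrightarrow> a = b \<and> a \<in> A" by auto

lemma I_eq: "Id_on H = Rel KI"
proof
  show "Id_on H \<subseteq> Rel KI"
  proof
    fix p assume "p \<in> Id_on H"
    then obtain x where "p = (x,x)" "x \<in> H" by auto
    moreover have "\<forall>x\<in>H. (x,x) \<in> Rel KI"
      by (simp add: H_list Rel_mem dd_def pos_def KI_def KIl_def)
    ultimately show "p \<in> Rel KI" by simp
  qed
  show "Rel KI \<subseteq> Id_on H"
    by (rule Rel_sub) (simp_all add: idon H_list KI_def KIl_def pos_def)
qed


definition NF :: "gen list set" where
  "NF = {[], [Sg], [Tg], [Sg,Sg], [Sg,Tg], [Tg,Tg], [Sg,Tg,Tg], [Tg,Tg,Tg]}"

fun Kw :: "gen list \<Rightarrow> (nat \<times> nat \<times> nat) set" where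
  "Kw [] = KI"
| "Kw [Sg] = KS"
| "Kw [Tg] = KT"
| "Kw [Sg,Sg] = KSS"
| "Kw [Sg,Tg] = KST"
| "Kw [Tg,Tg] = KTT"
| "Kw [Sg,Tg,Tg] = KSTT"
| "Kw [Tg,Tg,Tg] = KTTT"
| "Kw _ = {}"

fun mult :: "gen \<Rightarrow> gen list \<Rightarrow> gen list" where
  "mult Sg [] = [Sg]"
| "mult Sg [Sg] = [Sg,Sg]"
| "mult Sg [Tg] = [Sg,Tg]"
| "mult Sg [Sg,Sg] = [Sg,Tg]"
| "mult Sg [Sg,Tg] = [Tg,Tg]"
| "mult Sg [Tg,Tg] = [Sg,Tg,Tg]"
| "mult Sg [Sg,Tg,Tg] = [Tg,Tg,Tg]"
| "mult Sg [Tg,Tg,Tg] = [Sg,Tg,Tg]"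
| "mult Tg [] = [Tg]"
| "mult Tg [Sg] = [Sg,Tg]"
| "mult Tg [Tg] = [Tg,Tg]"
| "mult Tg [Sg,Sg] = [Tg,Tg]"
| "mult Tg [Sg,Tg] = [Sg,Tg,Tg]"
| "mult Tg [Tg,Tg] = [Tg,Tg,Tg]"
| "mult Tg [Sg,Tg,Tg] = [Sg,Tg,Tg]"
| "mult Tg [Tg,Tg,Tg] = [Tg,Tg,Tg]"
| "mult _ w = w"

fun nf :: "gen list \<Rightarrow> gen list" where
  "nf [] = []"
| "nf (a # w) = mult a (nf w)"

lemma NF_cases: "n \<in> NF \<Longrightarrow> n = [] \<or> n = [Sg] \<or> n = [Tg] \<or> n = [Sg,Sg] \<or> n = [Sg,Tg] \<or> n = [Tg,Tg] \<or> n = [Sg,Tg,Tg] \<or> n = [Tg,Tg,Tg]"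
  unfolding NF_def by simp

lemma mult_NF: "n \<in> NF \<Longrightarrow> mult a n \<in> NF"
  by (cases a; drule NF_cases; elim disjE; simp add: NF_def)

lemma nf_NF: "nf w \<in> NF"
proof (induction w)
  case Nil show ?case by (simp add: NF_def)
next
  case (Cons a w) show ?case using mult_NF[OF Cons.IH] by simp
qed

lemma gen_eq: "gen_rel a = Rel (Kw [a])"
  by (cases a) (simp_all add: gen_rel_def S_eq T_eq)

lemma comp_mult: "n \<in> NF \<Longrightarrow> Rel (Kw n) O gen_rel a = Rel (Kw (mult a n))"
  unfolding gen_eq
  by (cases a; drule NF_cases; elim disjE; simp add: comp_S_I comp_S_S comp_S_T comp_S_SS comp_S_ST comp_S_TT comp_S_STT comp_S_TTT comp_T_I comp_T_S comp_T_T comp_T_SS comp_T_ST comp_T_TT comp_T_STT comp_T_TTT)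

lemma eval_nf: "eval_word w = Rel (Kw (nf w))"
proof (induction w)
  case Nil show ?case by (simp add: I_eq)
next
  case (Cons a w) show ?case using Cons comp_mult[OF nf_NF] by simp
qed

abbreviation act :: "gen list \<Rightarrow> gen list \<Rightarrow> gen list" where
  "act u n \<equiv> foldr mult u n"

lemma nf_append: "nf (u @ w) = act u (nf w)"
  by (induction u) auto

lemma act_rels: "(l, r) \<in> pres_rels \<Longrightarrow> n \<in> NF \<Longrightarrow> act l n = act r n"
  unfolding pres_rels_def by (drule NF_cases) auto

lemma cong_nf: "pres_cong u v \<Longrightarrow> nf u = nf v"
proof (induction rule: pres_cong.induct)
  case (rel l r u v)
  show ?case unfolding nf_append using act_rels[OF rel nf_NF] by simp
qed auto

lemma cong_cons: "pres_cong u v \<Longrightarrow> pres_cong (a # u) (a # v)"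
proof (induction rule: pres_cong.induct)
  case (rel l r u v)
  show ?case using pres_cong.rel[OF rel, of "a # u" v] by simp
qed (auto intro: pres_cong.intros)

lemma cong_app: "pres_cong u v \<Longrightarrow> pres_cong (u @ w) (v @ w)"
proof (induction rule: pres_cong.induct)
  case (rel l r u v)
  show ?case using pres_cong.rel[OF rel, of u "v @ w"] by simp
qed (auto intro: pres_cong.intros)

lemma r1: "([Tg, Sg], [Sg, Tg]) \<in> pres_rels" by (simp add: pres_rels_def)
lemma r2: "([Sg, Sg, Sg], [Sg, Tg]) \<in> pres_rels" by (simp add: pres_rels_def)
lemma r3: "([Tg, Tg, Tg, Tg], [Tg, Tg, Tg]) \<in> pres_rels" by (simp add: pres_rels_def)
lemma r4: "([Tg, Sg, Sg], [Tg, Tg]) \<in> pres_rels" by (simp add: pres_rels_def)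
lemma r5: "([Sg, Tg, Tg, Tg], [Sg, Tg, Tg]) \<in> pres_rels" by (simp add: pres_rels_def)

lemma SST: "pres_cong [Sg,Sg,Tg] [Tg,Tg]"
proof -
  have a: "pres_cong [Sg,Tg,Sg] [Sg,Sg,Tg]" using pres_cong.rel[OF r1, of "[Sg]" "[]"] by simp
  have b: "pres_cong [Tg,Sg,Sg] [Sg,Tg,Sg]" using pres_cong.rel[OF r1, of "[]" "[Sg]"] by simp
  have c: "pres_cong [Tg,Sg,Sg] [Tg,Tg]" using pres_cong.rel[OF r4, of "[]" "[]"] by simp
  show ?thesis by (meson a b c pres_cong.sym pres_cong.trans)
qed

lemma mult_cong: "n \<in> NF \<Longrightarrow> pres_cong (a # n) (mult a n)"
proof -
  assume n: "n \<in> NF"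
  have s3: "pres_cong [Sg,Sg,Sg] [Sg,Tg]" using pres_cong.rel[OF r2, of "[]" "[]"] by simp
  have s4: "pres_cong [Sg,Sg,Tg,Tg] [Tg,Tg,Tg]" using cong_app[OF SST, of "[Tg]"] by simp
  have s5: "pres_cong [Sg,Tg,Tg,Tg] [Sg,Tg,Tg]" using pres_cong.rel[OF r5, of "[]" "[]"] by simp
  have t1: "pres_cong [Tg,Sg] [Sg,Tg]" using pres_cong.rel[OF r1, of "[]" "[]"] by simp
  have t2: "pres_cong [Tg,Sg,Sg] [Tg,Tg]" using pres_cong.rel[OF r4, of "[]" "[]"] by simp
  have t3: "pres_cong [Tg,Sg,Tg] [Sg,Tg,Tg]" using pres_cong.rel[OF r1, of "[]" "[Tg]"] by simp
  have t4': "pres_cong [Tg,Sg,Tg,Tg] [Sg,Tg,Tg,Tg]" using pres_cong.rel[OF r1, of "[]" "[Tg,Tg]"] by simp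
  have t4: "pres_cong [Tg,Sg,Tg,Tg] [Sg,Tg,Tg]" using pres_cong.trans[OF t4' s5] .
  have t5: "pres_cong [Tg,Tg,Tg,Tg] [Tg,Tg,Tg]" using pres_cong.rel[OF r3, of "[]" "[]"] by simp
  show ?thesis using NF_cases[OF n]
    by (cases a; elim disjE; simp add: pres_cong.refl s3 SST s4 s5 t1 t2 t3 t4 t5)
qed

lemma cong_to_nf: "pres_cong w (nf w)"
proof (induction w)
  case Nil show ?case by (simp add: pres_cong.refl)
next
  case (Cons a w)
  have "pres_cong (a # w) (a # nf w)" using cong_cons[OF Cons] .
  moreover have "pres_cong (a # nf w) (mult a (nf w))" using mult_cong[OF nf_NF] .
  ultimately show ?case using pres_cong.trans by simp
qed

lemma Kw_inj: "n \<in> NF \<Longrightarrow> m \<in> NF \<Longrightarrow> Rel (Kw n) = Rel (Kw m) \<Longrightarrow> n = m"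
proof -
  assume n: "n \<in> NF" and m: "m \<in> NF" and e: "Rel (Kw n) = Rel (Kw m)"
  have "\<forall>p\<in>set [(Maj 0, Maj 0), (Maj 0, Maj 4), (Maj 0, Maj 1), (Maj 0, Maj 2), (Maj 0, Min 2), (Maj 0, Min 3)].
          (p \<in> Rel (Kw n)) = (p \<in> Rel (Kw m))" using e by simp
  thus ?thesis using NF_cases[OF n] NF_cases[OF m]
    by (elim disjE; simp add: Rel_mem mem_H dd_def pos_def KI_def KS_def KT_def KSS_def KST_def KTT_def KSTT_def KTTT_def KIl_def KSl_def KTl_def KSSl_def KSTl_def KTTl_def KSTTl_def KTTTl_def)
qed

lemma nf_id: "n \<in> NF \<Longrightarrow> nf n = n"
  by (drule NF_cases) auto

lemma M_ST_eq: "M_ST = (\<lambda>n. Rel (Kw n)) ` NF"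
proof
  show "M_ST \<subseteq> (\<lambda>n. Rel (Kw n)) ` NF" unfolding M_ST_def using eval_nf nf_NF by blast
  show "(\<lambda>n. Rel (Kw n)) ` NF \<subseteq> M_ST"
  proof
    fix r assume "r \<in> (\<lambda>n. Rel (Kw n)) ` NF"
    then obtain n where "n \<in> NF" "r = Rel (Kw n)" by blast
    hence "r = eval_word n" using eval_nf nf_id by simp
    thus "r \<in> M_ST" unfolding M_ST_def by simp
  qed
qed

theorem mainTheorem4:
  shows "card M_ST = 8 \<and> (\<forall>u v. eval_word u = eval_word v \<longleftrightarrow> pres_cong u v)"
proof
  have inj: "inj_on (\<lambda>n. Rel (Kw n)) NF" using Kw_inj by (meson inj_onI)
  have "card NF = 8" unfolding NF_def by simp
  thus "card M_ST = 8" unfolding M_ST_eq using card_image[OF inj] by simp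
  show "\<forall>u v. eval_word u = eval_word v \<longleftrightarrow> pres_cong u v"
  proof (intro allI iffI)
    fix u v assume "eval_word u = eval_word v"
    hence "nf u = nf v" using Kw_inj[OF nf_NF nf_NF] eval_nf by metis
    thus "pres_cong u v" using cong_to_nf[of u] cong_to_nf[of v] by (metis pres_cong.sym pres_cong.trans)
  next
    fix u v assume "pres_cong u v"
    thus "eval_word u = eval_word v" using cong_nf eval_nf by metis
  qed
qed

end
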